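(* In the theory $\mathfrak{T}$, the following holds for every formula $\Phi(\alpha,\beta)$ (possibly with parameters): $$\forall X\Big(\forall\alpha\in X\,\exists!\beta\,\Phi(\alpha,\beta)\ \Rightarrow\ \exists Z\,\forall\gamma\big(\gamma\in Z\iff\exists\xi\,(\xi\in X\wedge\Phi(\xi,\gamma))\big)\Big).$$
   Context: The theory $\mathfrak{T}$ is set up as follows. The universe consists of "things", each of which is either a set or a function on a set. Variables $\alpha,\beta,\gamma,\eta,\xi,\zeta,\dots$ range over all things and $X,Y,Z,\dots$ range over sets. For a set $X$, the symbols $f_X,g_X,F_X,\dots$ range over functions on $X$. The primitive predicates are $\alpha\in\beta$, $\alpha=\beta$, the ternary predicate $f:Y\twoheadrightarrow Z$ (read "$f$ has domain $Y$ and codomain $Z$") and the ternary predicate $f:\alpha\mapsto\beta$ (read "$f$ maps $\alpha$ to $\beta$"). Notation: $\alpha^+$ is the singleton $\{\alpha\}$ and $\langle\alpha,\beta\rangle:=\{\alpha,\{\alpha,\beta\}\}$. An ur-function is a function on a singleton $\alpha^+$. For a function $f$ and an argument $\alpha$ with a unique $\beta$ such that $f:\alpha\mapsto\beta$, this $\beta$ is written $f(\alpha)$. Axioms of $\mathfrak{T}$: - Extensionality for sets. - No function on a set is a set. - A set has no domain or codomain and maps nothing to anything. - There is an empty set $\emptyset$. - Pairing: for all $\alpha,\beta$ the set $\{\alpha,\beta\}$ exists. - Union (sum set). - Power set. - Infinity: $\omega$ is the set of finite Zermelo ordinals, where $0=\emptyset$ and $n+1=n^+$. - Regularity. - A function on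 a set has no elements. - (GEN-F) For nonempty $X$, every $f_X$ satisfies $f_X:Y\twoheadrightarrow Z$ for some sets $Y,Z$, and for each $\alpha\in Y$ there is a unique $\beta$ with $f_X:\alpha\mapsto\beta$. - $f_X$ has no domain other than $X$. - $f_X:\alpha\mapsto\beta$ implies $\alpha\in X$. - For nonempty $X$, if $f_X:X\twoheadrightarrow\beta$ then $\beta$ is the image set $f_X[X]=\{\gamma:\exists\eta\in X\,(f_X:\eta\mapsto\gamma)\}$. - (INV) For nonempty $X$ with $f_X:X\twoheadrightarrow Y$, for every $\beta$ the set $\{\alpha\in X: f_X:\alpha\mapsto\beta\}$ exists. - (EXT-F) $f_X=g_Y$ iff $X=Y$ and, for all $\alpha,\beta$, $f_X:\alpha\mapsto\beta \iff g_Y:\alpha\mapsto\beta$. - There is an inactive function $1_\emptyset$ with $1_\emptyset:\emptyset\twoheadrightarrow\emptyset$ that maps nothing. - (UFA) For all $\alpha,\beta$ there is an ur-function $f_{\alpha^+}$ with $f_{\alpha^+}:\alpha^+\twoheadrightarrow\beta^+$ and $f_{\alpha^+}:\alpha\mapsto\beta$. - (REG-F) If $f_X:X\twoheadrightarrow Y$, then for every $\alpha$, neither $f_X:f_X\mapsto\alpha$ nor $f_X:\alpha\mapsto f_X$. - (SUM-F, nonstandard, with a multiple quantifier over families) For every nonempty set $X$ and every family $(f_{\alpha^+})_{\alpha\in X}$ that assigns to each $\alpha\in X$ an ur-function $f_{\alpha^+}$ on $\alpha^+$, there exist a function $F_X$ and a set $Y$ with $F_X:X\twoheadrightarrow Y$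 and $F_X:\alpha\mapsto f_{\alpha^+}(\alpha)$ for every $\alpha\in X$. *)

theory Defs
  imports Main
begin

text \<open>A structure for the language of the theory T:
  a universe of things of type 'u, with
  mem a b      : a is an element of b,
  isSet a      : a is a set,
  onset f X    : f is a function on the set X (the sort of f_X),
  dc f Y Z     : f has domain Y and codomain Z,
  mp f a b     : f maps a to b.\<close>

definition is_empty :: "('u \<Rightarrow> 'u \<Rightarrow> bool) \<Rightarrow> ('u \<Rightarrow> bool) \<Rightarrow> 'u \<Rightarrow> bool" where
  "is_empty mem isSet E \<longleftrightarrow> isSet E \<and> (\<forall>a. \<not> mem a E)"

definition is_sing :: "('u \<Rightarrow> 'u \<Rightarrow> bool) \<Rightarrow> ('u \<Rightarrow> bool) \<Rightarrow> 'u \<Rightarrow> 'u \<Rightarrow> bool" where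
  "is_sing mem isSet A a \<longleftrightarrow> isSet A \<and> (\<forall>c. mem c A \<longleftrightarrow> c = a)"

inductive zord :: "('u \<Rightarrow> 'u \<Rightarrow> bool) \<Rightarrow> ('u \<Rightarrow> bool) \<Rightarrow> 'u \<Rightarrow> bool"
  for mem isSet where
  zord_zero: "is_empty mem isSet E \<Longrightarrow> zord mem isSet E"
| zord_succ: "zord mem isSet a \<Longrightarrow> is_sing mem isSet b a \<Longrightarrow> zord mem isSet b"

definition T_model ::
  "('u \<Rightarrow> 'u \<Rightarrow> bool) \<Rightarrow> ('u \<Rightarrow> bool) \<Rightarrow> ('u \<Rightarrow> 'u \<Rightarrow> bool)
   \<Rightarrow> ('u \<Rightarrow> 'u \<Rightarrow> 'u \<Rightarrow> bool) \<Rightarrow> ('u \<Rightarrow> 'u \<Rightarrow> 'u \<Rightarrow> bool) \<Rightarrow> bool" where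
  "T_model mem isSet onset dc mp \<longleftrightarrow>
    \<comment> \<open>sorts: every thing is a set or a function on a set\<close>
    (\<forall>a. isSet a \<or> (\<exists>X. isSet X \<and> onset a X)) \<and>
    (\<forall>f X. onset f X \<longrightarrow> isSet X) \<and>
    \<comment> \<open>extensionality for sets\<close>
    (\<forall>X Y. isSet X \<longrightarrow> isSet Y \<longrightarrow> (\<forall>a. mem a X \<longleftrightarrow> mem a Y) \<longrightarrow> X = Y) \<and>
    \<comment> \<open>no function on a set is a set\<close>
    (\<forall>f X. onset f X \<longrightarrow> \<not> isSet f) \<and>
    \<comment> \<open>a set has no domain or codomain and maps nothing to anything\<close>
    (\<forall>X. isSet X \<longrightarrow> (\<forall>Y Z. \<not> dc X Y Z) \<and> (\<forall>a b. \<not> mp X a b)) \<and>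
    \<comment> \<open>empty set\<close>
    (\<exists>E. is_empty mem isSet E) \<and>
    \<comment> \<open>pairing\<close>
    (\<forall>a b. \<exists>P. isSet P \<and> (\<forall>c. mem c P \<longleftrightarrow> c = a \<or> c = b)) \<and>
    \<comment> \<open>union\<close>
    (\<forall>X. isSet X \<longrightarrow> (\<exists>U. isSet U \<and> (\<forall>c. mem c U \<longleftrightarrow> (\<exists>Y. mem Y X \<and> mem c Y)))) \<and>
    \<comment> \<open>power set\<close>
    (\<forall>X. isSet X \<longrightarrow> (\<exists>P. isSet P \<and>
        (\<forall>c. mem c P \<longleftrightarrow> isSet c \<and> (\<forall>d. mem d c \<longrightarrow> mem d X)))) \<and>
    \<comment> \<open>infinity: the set of finite Zermelo ordinals exists\<close>
    (\<exists>W. isSet W \<and> (\<forall>a. mem a W \<longleftrightarrow> zord mem isSet a)) \<and>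
    \<comment> \<open>regularity\<close>
    (\<forall>X. isSet X \<longrightarrow> (\<exists>a. mem a X) \<longrightarrow> (\<exists>a. mem a X \<and> \<not> (\<exists>b. mem b a \<and> mem b X))) \<and>
    \<comment> \<open>a function on a set has no elements\<close>
    (\<forall>f X. onset f X \<longrightarrow> (\<forall>a. \<not> mem a f)) \<and>
    \<comment> \<open>GEN-F\<close>
    (\<forall>X f. isSet X \<longrightarrow> (\<exists>a. mem a X) \<longrightarrow> onset f X \<longrightarrow>
        (\<exists>Y Z. isSet Y \<and> isSet Z \<and> dc f Y Z \<and> (\<forall>a. mem a Y \<longrightarrow> (\<exists>!b. mp f a b)))) \<and>
    \<comment> \<open>f_X has no domain other than X\<close>
    (\<forall>X f Y Z. onset f X \<longrightarrow> isSet Y \<longrightarrow> isSet Z \<longrightarrow> dc f Y Z \<longrightarrow> Y = X) \<and>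
    \<comment> \<open>f_X maps only elements of X\<close>
    (\<forall>X f a b. onset f X \<longrightarrow> mp f a b \<longrightarrow> mem a X) \<and>
    \<comment> \<open>codomain is the image set\<close>
    (\<forall>X f b. isSet X \<longrightarrow> (\<exists>a. mem a X) \<longrightarrow> onset f X \<longrightarrow> dc f X b \<longrightarrow>
        isSet b \<and> (\<forall>c. mem c b \<longleftrightarrow> (\<exists>e. mem e X \<and> mp f e c))) \<and>
    \<comment> \<open>INV\<close>
    (\<forall>X f Y. isSet X \<longrightarrow> (\<exists>a. mem a X) \<longrightarrow> onset f X \<longrightarrow> isSet Y \<longrightarrow> dc f X Y \<longrightarrow>
        (\<forall>b. \<exists>S. isSet S \<and> (\<forall>a. mem a S \<longleftrightarrow> mem a X \<and> mp f a b))) \<and>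
    \<comment> \<open>EXT-F\<close>
    (\<forall>f X g Y. onset f X \<longrightarrow> onset g Y \<longrightarrow>
        (f = g \<longleftrightarrow> X = Y \<and> (\<forall>a b. mp f a b \<longleftrightarrow> mp g a b))) \<and>
    \<comment> \<open>inactive function on the empty set\<close>
    (\<exists>e E. is_empty mem isSet E \<and> onset e E \<and> dc e E E \<and> (\<forall>a b. \<not> mp e a b)) \<and>
    \<comment> \<open>UFA\<close>
    (\<forall>a b A B. is_sing mem isSet A a \<longrightarrow> is_sing mem isSet B b \<longrightarrow>
        (\<exists>f. onset f A \<and> dc f A B \<and> mp f a b)) \<and>
    \<comment> \<open>REG-F\<close>
    (\<forall>f X Y. onset f X \<longrightarrow> isSet Y \<longrightarrow> dc f X Y \<longrightarrow> (\<forall>a. \<not> mp f f a \<and> \<not> mp f a f)) \<and>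
    \<comment> \<open>SUM-F, families as (meta-level) functions assigning ur-functions\<close>
    (\<forall>X. isSet X \<longrightarrow> (\<exists>a. mem a X) \<longrightarrow>
      (\<forall>fam :: 'u \<Rightarrow> 'u.
        (\<forall>a. mem a X \<longrightarrow> (\<exists>A. is_sing mem isSet A a \<and> onset (fam a) A)) \<longrightarrow>
        (\<exists>F Y. isSet Y \<and> onset F X \<and> dc F X Y \<and>
           (\<forall>a. mem a X \<longrightarrow> mp F a (THE b. mp (fam a) a b)))))"

end

theory Submission
  imports Defs
begin

theorem mainTheorem4:
  fixes mem :: "'u \<Rightarrow> 'u \<Rightarrow> bool" and isSet :: "'u \<Rightarrow> bool"
    and onset :: "'u \<Rightarrow> 'u \<Rightarrow> bool"
    and dc :: "'u \<Rightarrow> 'u \<Rightarrow> 'u \<Rightarrow> bool" and mp :: "'u \<Rightarrow> 'u \<Rightarrow> 'u \<Rightarrow> bool"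
    and \<Phi> :: "'u \<Rightarrow> 'u \<Rightarrow> bool"
  assumes "T_model mem isSet onset dc mp"
  shows "\<forall>X. isSet X \<longrightarrow> (\<forall>a. mem a X \<longrightarrow> (\<exists>!b. \<Phi> a b)) \<longrightarrow>
           (\<exists>Z. isSet Z \<and> (\<forall>c. mem c Z \<longleftrightarrow> (\<exists>x. mem x X \<and> \<Phi> x c)))"
proof (intro allI impI)
  fix X assume XS: "isSet X" and U: "\<forall>a. mem a X \<longrightarrow> (\<exists>!b. \<Phi> a b)"
  note M = assms[unfolded T_model_def]
  have pair: "\<forall>a b. \<exists>P. isSet P \<and> (\<forall>c. mem c P \<longleftrightarrow> c = a \<or> c = b)" by (rule M[THEN conjunct2, THEN conjunct2, THEN conjunct2, THEN conjunct2, THEN conjunct2, THEN conjunct2, THEN conjunct1])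
  have sing: "\<exists>A. is_sing mem isSet A a" for a
    using pair unfolding is_sing_def by blast
  have genf: "\<forall>X f. isSet X \<longrightarrow> (\<exists>a. mem a X) \<longrightarrow> onset f X \<longrightarrow>
        (\<exists>Y Z. isSet Y \<and> isSet Z \<and> dc f Y Z \<and> (\<forall>a. mem a Y \<longrightarrow> (\<exists>!b. mp f a b)))" by (rule M[THEN conjunct2, THEN conjunct2, THEN conjunct2, THEN conjunct2, THEN conjunct2, THEN conjunct2, THEN conjunct2, THEN conjunct2, THEN conjunct2, THEN conjunct2, THEN conjunct2, THEN conjunct2, THEN conjunct1])
  have dom: "\<forall>X f Y Z. onset f X \<longrightarrow> isSet Y \<longrightarrow> isSet Z \<longrightarrow> dc f Y Z \<longrightarrow> Y = X" by (rule M[THEN conjunct2, THEN conjunct2, THEN conjunct2, THEN conjunct2, THEN conjunct2, THEN conjunct2, THEN conjunct2, THEN conjunct2, THEN conjunct2, THEN conjunct2, THEN conjunct2, THEN conjunct2, THEN conjunct2, THEN conjunct1])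
  have uniq: "\<exists>!b. mp f a b" if h: "isSet A" "mem a A" "onset f A" for f a A
  proof -
    obtain Y Z where "isSet Y" "isSet Z" "dc f Y Z" "\<forall>a. mem a Y \<longrightarrow> (\<exists>!b. mp f a b)"
      using genf h by blast
    moreover have "Y = A" using dom calculation h by blast
    ultimately show ?thesis using h by blast
  qed
  show "\<exists>Z. isSet Z \<and> (\<forall>c. mem c Z \<longleftrightarrow> (\<exists>x. mem x X \<and> \<Phi> x c))"
  proof (cases "\<exists>a. mem a X")
    case False
    then show ?thesis using XS by blast
  next
    case True
    define bb where "bb a = (THE b. \<Phi> a b)" for a
    have bbP: "mem a X \<Longrightarrow> \<Phi> a c \<longleftrightarrow> c = bb a" for a c
      using U unfolding bb_def by (metis theI)
    have ufa: "\<forall>a b A B. is_sing mem isSet A a \<longrightarrow> is_sing mem isSet B b \<longrightarrow>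
        (\<exists>f. onset f A \<and> dc f A B \<and> mp f a b)" by (rule M[THEN conjunct2, THEN conjunct2, THEN conjunct2, THEN conjunct2, THEN conjunct2, THEN conjunct2, THEN conjunct2, THEN conjunct2, THEN conjunct2, THEN conjunct2, THEN conjunct2, THEN conjunct2, THEN conjunct2, THEN conjunct2, THEN conjunct2, THEN conjunct2, THEN conjunct2, THEN conjunct2, THEN conjunct2, THEN conjunct1])
    have ex: "\<exists>f A. is_sing mem isSet A a \<and> onset f A \<and> mp f a (bb a)" for a
    proof -
      obtain A B where "is_sing mem isSet A a" "is_sing mem isSet B (bb a)" using sing by blast
      then show ?thesis using ufa by blast
    qed
    define fam where "fam a = (SOME f. \<exists>A. is_sing mem isSet A a \<and> onset f A \<and> mp f a (bb a))" for a
    have famP: "\<exists>A. is_sing mem isSet A a \<and> onset (fam a) A \<and> mp (fam a) a (bb a)" for a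
      unfolding fam_def using someI_ex[OF ex] by blast
    have famT: "(THE b. mp (fam a) a b) = bb a" for a
    proof -
      obtain A where A: "is_sing mem isSet A a" "onset (fam a) A" "mp (fam a) a (bb a)" using famP by blast
      have "\<exists>!b. mp (fam a) a b" using uniq[of A a "fam a"] A unfolding is_sing_def by blast
      then show ?thesis using A(3) by (metis the_equality)
    qed
    have sumf: "\<forall>X. isSet X \<longrightarrow> (\<exists>a. mem a X) \<longrightarrow>
      (\<forall>fam :: 'u \<Rightarrow> 'u.
        (\<forall>a. mem a X \<longrightarrow> (\<exists>A. is_sing mem isSet A a \<and> onset (fam a) A)) \<longrightarrow>
        (\<exists>F Y. isSet Y \<and> onset F X \<and> dc F X Y \<and>
           (\<forall>a. mem a X \<longrightarrow> mp F a (THE b. mp (fam a) a b))))" by (rule M[THEN conjunct2, THEN conjunct2, THEN conjunct2, THEN conjunct2, THEN conjunct2, THEN conjunct2, THEN conjunct2, THEN conjunct2, THEN conjunct2, THEN conjunct2, THEN conjunct2, THEN conjunct2, THEN conjunct2, THEN conjunct2, THEN conjunct2, THEN conjunct2, THEN conjunct2, THEN conjunct2, THEN conjunct2, THEN conjunct2, THEN conjunct2])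
    obtain F Y where FY: "isSet Y" "onset F X" "dc F X Y" "\<forall>a. mem a X \<longrightarrow> mp F a (bb a)"
      using sumf XS True famP famT by metis
    have img: "\<forall>X f b. isSet X \<longrightarrow> (\<exists>a. mem a X) \<longrightarrow> onset f X \<longrightarrow> dc f X b \<longrightarrow>
        isSet b \<and> (\<forall>c. mem c b \<longleftrightarrow> (\<exists>e. mem e X \<and> mp f e c))" by (rule M[THEN conjunct2, THEN conjunct2, THEN conjunct2, THEN conjunct2, THEN conjunct2, THEN conjunct2, THEN conjunct2, THEN conjunct2, THEN conjunct2, THEN conjunct2, THEN conjunct2, THEN conjunct2, THEN conjunct2, THEN conjunct2, THEN conjunct2, THEN conjunct1])
    have Yc: "mem c Y \<longleftrightarrow> (\<exists>e. mem e X \<and> mp F e c)" for c using img XS True FY by blast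
    have Fu: "mem e X \<Longrightarrow> mp F e c \<longleftrightarrow> c = bb e" for e c
      using uniq[OF XS _ FY(2)] FY(4) by blast
    show ?thesis using FY(1) Yc Fu bbP by metis
  qed
qed

end
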